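(* Let $M\in\mathbb{R}^{m\times n}$ with $\operatorname{rank}(M)=r$, and let $\{p_i\}_{i=1}^n$ be a probability distribution on $[n]$ with $p_i>0$ for all $i$, $p_{\min}=\min_{i\in[n]}p_i$. For $j=1,\dots,d$ independently sample $i_j\in[n]$ with $\Pr[i_j=i]=p_i$, and let $A\in\mathbb{R}^{m\times d}$ have columns $A^{(j)}=M^{(i_j)}/\sqrt{d\,p_{i_j}}$. Let $t>0$. If $d\ge 7\mu(r)r(t+\ln r)/(n\,p_{\min})$, then with probability at least $1-e^{-t}$, $\operatorname{rank}(A)=r$.
   Context: For a matrix $B$, $B_{(i)}$ denotes its $i$-th row and $B^{(j)}$ its $j$-th column. With $\bar U\in\mathbb{R}^{m\times r}$, $\bar V\in\mathbb{R}^{n\times r}$ the top-$r$ left and right singular vectors of $M$, the incoherence is $\mu(r)=\max\left(\max_{i\in[m]}\frac{m}{r}\|\bar U_{(i)}\|_2^2,\ \max_{i\in[n]}\frac{n}{r}\|\bar V_{(i)}\|_2^2\right)$. *)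

theory Defs
  imports "HOL-Analysis.Analysis" "HOL-Probability.Probability"
begin

text \<open>The columns of U (resp. V)
  are then the top-r left (resp. right) singular vectors of M.\<close>
definition diag_vec :: "real^'r \<Rightarrow> real^'r^'r" where
  "diag_vec s = (\<chi> i j. if i = j then s $ i else 0)"

definition is_thin_svd :: "real^'n^'m \<Rightarrow> real^'r^'m \<Rightarrow> real^'r \<Rightarrow> real^'r^'n \<Rightarrow> bool" where
  "is_thin_svd M U s V \<longleftrightarrow>
     transpose U ** U = mat 1 \<and> transpose V ** V = mat 1 \<and>
     (\<forall>k. s $ k > 0) \<and> M = U ** diag_vec s ** transpose V"

definition incoherence :: "real^'r^'m \<Rightarrow> real^'r^'n \<Rightarrow> real" where
  "incoherence U V = max
     (Max ((\<lambda>i. real CARD('m) / real CARD('r) * (norm (U $ i))\<^sup>2) ` UNIV))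
     (Max ((\<lambda>i. real CARD('n) / real CARD('r) * (norm (V $ i))\<^sup>2) ` UNIV))"

definition sampled_matrix :: "real^'n^'m \<Rightarrow> 'n pmf \<Rightarrow> ('d \<Rightarrow> 'n) \<Rightarrow> real^'d^'m" where
  "sampled_matrix M p f = (\<chi> k j. M $ k $ (f j) / sqrt (real CARD('d) * pmf p (f j)))"

end

theory Submission
  imports Defs
begin

lemma prob_bind_finite:
  fixes p :: "'a::finite pmf"
  shows "measure_pmf.prob (bind_pmf p N) X = (\<Sum>y\<in>UNIV. pmf p y * measure_pmf.prob (N y) X)"
proof -
  have "emeasure (measure_pmf (bind_pmf p N)) X = (\<integral>\<^sup>+y. emeasure (N y) X \<partial>p)"
    by (rule emeasure_bind_pmf)
  also have "\<dots> = (\<integral>\<^sup>+y. ennreal (pmf p y) * emeasure (N y) X \<partial>count_space UNIV)"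
    by (rule nn_integral_measure_pmf)
  also have "\<dots> = (\<Sum>y\<in>UNIV. ennreal (pmf p y * measure_pmf.prob (N y) X))"
    by (simp add: nn_integral_count_space_finite measure_pmf.emeasure_eq_measure ennreal_mult)
  finally have "measure_pmf.prob (bind_pmf p N) X = enn2real (\<Sum>y\<in>UNIV. ennreal (pmf p y * measure_pmf.prob (N y) X))"
    by (simp add: measure_def)
  also have "\<dots> = (\<Sum>y\<in>UNIV. pmf p y * measure_pmf.prob (N y) X)"
    by (subst sum_ennreal) (auto intro!: sum_nonneg enn2real_ennreal)
  finally show ?thesis .
qed

lemma fail_bound:
  fixes v :: "'n::finite \<Rightarrow> 'a::euclidean_space" and p :: "'n pmf"
  assumes esc: "\<And>W. measure_pmf.prob p {y. v y \<notin> span W} \<ge> q * (real DIM('a) - real (dim W))"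
    and q1: "q \<le> 1"
    and fin: "finite D"
  shows "measure_pmf.prob (Pi_pmf D dflt (\<lambda>_. p)) {f. span (W \<union> (\<lambda>j. v (f j)) ` D) \<noteq> UNIV}
     \<le> (real DIM('a) - real (dim W)) * (1-q)^card D"
  using fin
proof (induction D arbitrary: W rule: finite_induct)
  case empty
  have dle: "dim W \<le> DIM('a)"
    by (metis dim_subset_UNIV dim_UNIV subset_UNIV)
  show ?case
  proof (cases "span W = UNIV")
    case True
    then show ?thesis using dle by simp
  next
    case False
    then have "dim W < DIM('a)" using dle dim_eq_full[of W] by (simp add: order_le_less)
    then have "1 \<le> real DIM('a) - real (dim W)" by linarith
    moreover have "measure_pmf.prob (Pi_pmf {} dflt (\<lambda>_. p)) {f. span (W \<union> (\<lambda>j. v (f j)) ` {}) \<noteq> UNIV} \<le> 1"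
      by (rule measure_pmf.prob_le_1)
    ultimately show ?thesis by simp
  qed
next
  case (insert x D)
  define c where "c = (1-q)^card D"
  have c0: "c \<ge> 0" unfolding c_def using q1 by simp
  define E where "E = {f. span (W \<union> (\<lambda>j. v (f j)) ` insert x D) \<noteq> UNIV}"
  have pre: "(\<lambda>f. f(x:=y)) -` E = {f. span (insert (v y) W \<union> (\<lambda>j. v (f j)) ` D) \<noteq> UNIV}" for y
  proof -
    have "W \<union> (\<lambda>j. v ((f(x:=y)) j)) ` insert x D = insert (v y) W \<union> (\<lambda>j. v (f j)) ` D" for f :: "'b \<Rightarrow> 'n"
    proof -
      have "(\<lambda>j. v ((f(x:=y)) j)) ` D = (\<lambda>j. v (f j)) ` D"
        using insert.hyps(2) by (intro image_cong) auto
      then show ?thesis by auto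
    qed
    then show ?thesis unfolding E_def vimage_def by simp
  qed
  have "measure_pmf.prob (Pi_pmf (insert x D) dflt (\<lambda>_. p)) E
      = (\<Sum>y\<in>UNIV. pmf p y * measure_pmf.prob (map_pmf (\<lambda>f. f(x:=y)) (Pi_pmf D dflt (\<lambda>_. p))) E)"
    by (simp add: Pi_pmf_insert'[OF insert.hyps] prob_bind_finite map_pmf_def)
  also have "\<dots> = (\<Sum>y\<in>UNIV. pmf p y * measure_pmf.prob (Pi_pmf D dflt (\<lambda>_. p)) {f. span (insert (v y) W \<union> (\<lambda>j. v (f j)) ` D) \<noteq> UNIV})"
    by (simp add: pre)
  also have "\<dots> \<le> (\<Sum>y\<in>UNIV. pmf p y * ((real DIM('a) - real (dim (insert (v y) W))) * c))"
    unfolding c_def by (intro sum_mono mult_left_mono insert.IH) auto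
  also have "\<dots> = (\<Sum>y\<in>UNIV. pmf p y * ((real DIM('a) - real (dim W)) * c)) - (\<Sum>y\<in>UNIV. pmf p y * (if v y \<in> span W then 0 else c))"
    by (simp add: dim_insert sum_subtractf[symmetric] algebra_simps) (intro sum.cong refl; simp add: algebra_simps)
  also have "(\<Sum>y\<in>UNIV. pmf p y * ((real DIM('a) - real (dim W)) * c)) = (real DIM('a) - real (dim W)) * c"
    by (simp add: sum_distrib_right[symmetric] sum_pmf_eq_1)
  also have "(\<Sum>y\<in>UNIV. pmf p y * (if v y \<in> span W then 0 else c)) = c * measure_pmf.prob p {y. v y \<notin> span W}"
    by (simp add: measure_measure_pmf_finite sum_distrib_left if_distrib sum.If_cases mult.commute Compl_eq)
  also have "(real DIM('a) - real (dim W)) * c - c * measure_pmf.prob p {y. v y \<notin> span W}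
      \<le> (real DIM('a) - real (dim W)) * c - c * (q * (real DIM('a) - real (dim W)))"
    using esc[of W] c0 by (intro diff_left_mono mult_left_mono) auto
  also have "\<dots> = (real DIM('a) - real (dim W)) * (1-q)^card (insert x D)"
    using insert.hyps by (simp add: c_def algebra_simps)
  finally show ?case unfolding E_def .
qed

lemma orth_sum_sq:
  fixes V :: "real^'r::finite^'n::finite"
  assumes VV: "transpose V ** V = mat 1"
  shows "(\<Sum>i\<in>UNIV. (V$i \<bullet> w)^2) = (norm w)^2"
proof -
  have "(\<Sum>i\<in>UNIV. (V$i \<bullet> w)^2) = (V *v w) \<bullet> (V *v w)"
    by (simp add: matrix_mult_dot inner_vec_def power2_eq_square)
  also have "\<dots> = ((V *v w) v* V) \<bullet> w"
    by (simp add: dot_lmul_matrix)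
  also have "(V *v w) v* V = w"
    by (metis VV matrix_vector_mul_assoc matrix_vector_mul_lid transpose_matrix_vector)
  finally show ?thesis by (simp add: power2_norm_eq_inner)
qed

lemma orth_rows_total:
  fixes V :: "real^'r::finite^'n::finite"
  assumes VV: "transpose V ** V = mat 1"
  shows "(\<Sum>i\<in>UNIV. (norm (V$i))^2) = real CARD('r)"
proof -
  have "(\<Sum>i\<in>UNIV. (norm (V$i))^2) = (\<Sum>i\<in>UNIV. \<Sum>k\<in>UNIV. (V$i \<bullet> axis k 1)^2)"
  proof (intro sum.cong refl)
    fix i
    have "\<And>k. V$i \<bullet> axis k 1 = V$i$k" by (simp add: cart_eq_inner_axis)
    have "(norm (V$i))^2 = V$i \<bullet> V$i" by (rule power2_norm_eq_inner)
    also have "\<dots> = (\<Sum>k\<in>UNIV. V$i$k * V$i$k)" by (simp add: inner_vec_def)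
    finally show "(norm (V$i))^2 = (\<Sum>k\<in>UNIV. (V$i \<bullet> axis k 1)^2)"
      by (simp add: cart_eq_inner_axis[symmetric] power2_eq_square)
  qed
  also have "\<dots> = (\<Sum>k\<in>UNIV. \<Sum>i\<in>UNIV. (V$i \<bullet> axis k 1)^2)"
    by (rule sum.swap)
  also have "\<dots> = (\<Sum>k\<in>(UNIV::'r set). 1)"
    by (simp add: orth_sum_sq[OF VV])
  finally show ?thesis by simp
qed

lemma in_span_sum_sq:
  fixes V :: "real^'r::finite^'n::finite"
  assumes VV: "transpose V ** V = mat 1"
  shows "(\<Sum>i\<in>{i. V$i \<in> span W}. (norm (V$i))^2) \<le> real (dim W)"
proof -
  obtain B where B: "B \<subseteq> span W" "pairwise orthogonal B" "\<And>x. x \<in> B \<Longrightarrow> norm x = 1"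
    "independent B" "card B = dim (span W)" "span B = span W"
    using orthonormal_basis_subspace[of "span W"] by (metis subspace_span)
  have finB: "finite B" using B(4) by (simp add: independent_imp_finite)
  have ex: "(norm x)^2 = (\<Sum>b\<in>B. (x \<bullet> b)^2)" if "x \<in> span W" for x :: "real^'r"
  proof -
    have "x = (\<Sum>b\<in>B. (x \<bullet> b) *\<^sub>R b)"
      using orthonormal_basis_expand[OF B(2) B(3) _ finB, of x] that B(6) by simp
    then have "x \<bullet> x = x \<bullet> (\<Sum>b\<in>B. (x \<bullet> b) *\<^sub>R b)" by simp
    also have "\<dots> = (\<Sum>b\<in>B. (x \<bullet> b)^2)"
      by (simp add: inner_sum_right power2_eq_square)
    finally show ?thesis by (simp add: power2_norm_eq_inner)
  qed
  have "(\<Sum>i\<in>{i. V$i \<in> span W}. (norm (V$i))^2) = (\<Sum>i\<in>{i. V$i \<in> span W}. \<Sum>b\<in>B. (V$i \<bullet> b)^2)"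
    by (intro sum.cong refl) (simp add: ex)
  also have "\<dots> = (\<Sum>b\<in>B. \<Sum>i\<in>{i. V$i \<in> span W}. (V$i \<bullet> b)^2)"
    by (rule sum.swap)
  also have "\<dots> \<le> (\<Sum>b\<in>B. \<Sum>i\<in>UNIV. (V$i \<bullet> b)^2)"
    by (intro sum_mono sum_mono2) auto
  also have "\<dots> = (\<Sum>b\<in>B. 1)"
    using B(3) by (simp add: orth_sum_sq[OF VV])
  also have "\<dots> = real (dim W)" using B(5) by simp
  finally show ?thesis .
qed

lemma escape:
  fixes V :: "real^'r::finite^'n::finite" and p :: "'n pmf"
  assumes VV: "transpose V ** V = mat 1"
    and rowb: "\<And>i. (norm (V$i))^2 \<le> Bd"
    and pmin: "\<And>i. pmf p i \<ge> a"
    and Bpos: "Bd > 0" and a0: "a \<ge> 0"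
  shows "measure_pmf.prob p {y. V$y \<notin> span W} \<ge> (a / Bd) * (real CARD('r) - real (dim W))"
proof -
  define Out where "Out = {y. V$y \<notin> span W}"
  have U: "(UNIV::'n set) = {i. V$i \<in> span W} \<union> Out" unfolding Out_def by auto
  have split: "(\<Sum>i\<in>UNIV. (norm (V$i))^2) = (\<Sum>i\<in>{i. V$i \<in> span W}. (norm (V$i))^2) + (\<Sum>i\<in>Out. (norm (V$i))^2)"
    by (subst U, rule sum.union_disjoint) (auto simp: Out_def)
  have "real CARD('r) - real (dim W) \<le> (\<Sum>i\<in>Out. (norm (V$i))^2)"
    using split orth_rows_total[OF VV] in_span_sum_sq[OF VV, of W] by linarith
  also have "\<dots> \<le> real (card Out) * Bd"
    using sum_mono[of Out "\<lambda>i. (norm (V$i))^2" "\<lambda>_. Bd"] rowb by simp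
  finally have c: "(real CARD('r) - real (dim W)) / Bd \<le> real (card Out)"
    using Bpos by (simp add: divide_le_eq)
  have "(a / Bd) * (real CARD('r) - real (dim W)) = a * ((real CARD('r) - real (dim W)) / Bd)" by simp
  also have "\<dots> \<le> a * real (card Out)" using mult_left_mono[OF c a0] by simp
  also have "\<dots> \<le> (\<Sum>i\<in>Out. pmf p i)"
    using sum_mono[of Out "\<lambda>_. a" "pmf p"] pmin by (simp add: mult.commute)
  also have "\<dots> = measure_pmf.prob p Out" by (simp add: measure_measure_pmf_finite)
  finally show ?thesis unfolding Out_def .
qed

lemma rank_sampled:
  fixes M :: "real^'n::finite^'m::finite"
    and U :: "real^'r::finite^'m" and s :: "real^'r" and V :: "real^'r^'n"
    and p :: "'n pmf" and f :: "'d::finite \<Rightarrow> 'n"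
  assumes rank: "rank M = CARD('r)"
    and svd: "is_thin_svd M U s V"
    and ppos: "\<forall>i. pmf p i > 0"
    and sp: "span (range (\<lambda>j. V $ f j)) = UNIV"
  shows "rank (sampled_matrix M p f :: real^'d^'m) = CARD('r)"
proof -
  have UU: "transpose U ** U = mat 1" and spos: "\<And>k. s $ k > 0" and Mdef: "M = U ** diag_vec s ** transpose V"
    using svd unfolding is_thin_svd_def by auto
  define c where "c = (\<lambda>i. sqrt (real CARD('d) * pmf p i))"
  have cpos: "c i > 0" for i unfolding c_def using ppos by simp
  define Sc :: "real^'d^'n" where "Sc = (\<chi> i j. if f j = i then 1 / c i else 0)"
  have A: "sampled_matrix M p f = M ** Sc"
    unfolding sampled_matrix_def Sc_def c_def
    by (simp add: matrix_matrix_mult_def vec_eq_iff if_distrib[of "\<lambda>x. _ * x"] sum.delta' cong: if_cong)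
  have le1: "rank (sampled_matrix M p f) \<le> CARD('r)"
    unfolding A using rank_mul_le_left[of M Sc] rank by simp
  define X :: "real^'m^'r" where "X = diag_vec (\<chi> k. 1 / s $ k) ** transpose U"
  have DD: "diag_vec (\<chi> k. 1 / s $ k) ** diag_vec s = mat 1"
    using spos by (simp add: diag_vec_def matrix_matrix_mult_def mat_def vec_eq_iff if_distrib[of "\<lambda>x. _ * x"] sum.delta' cong: if_cong)
       (metis less_irrefl)
  have XM: "X ** M = transpose V"
  proof -
    have "X ** M = diag_vec (\<chi> k. 1 / s $ k) ** (transpose U ** U) ** diag_vec s ** transpose V"
      unfolding X_def Mdef by (simp add: matrix_mul_assoc)
    also have "\<dots> = transpose V" by (simp add: UU DD matrix_mul_assoc[symmetric] matrix_mul_lid)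
    finally show ?thesis .
  qed
  have le2: "rank (transpose V ** Sc) \<le> rank (sampled_matrix M p f)"
    unfolding A using rank_mul_le_right[of X "M ** Sc"] by (simp add: matrix_mul_assoc XM)
  have img: "V $ f j \<in> range (\<lambda>x. (transpose V ** Sc) *v x)" for j
  proof -
    have "Sc *v axis j (c (f j)) = axis (f j) 1"
      using cpos[of "f j"] unfolding Sc_def
      by (simp add: matrix_vector_mult_def vec_eq_iff axis_def if_distrib[of "\<lambda>x. _ * x"] sum.delta' cong: if_cong)
    then have "(transpose V ** Sc) *v axis j (c (f j)) = V $ f j"
      by (simp add: matrix_vector_mul_assoc[symmetric] matrix_vector_mult_basis column_transpose row_def vec_lambda_eta)
    then show ?thesis by (metis rangeI)
  qed
  have "span (range (\<lambda>j. V $ f j)) \<subseteq> range (\<lambda>x. (transpose V ** Sc) *v x)"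
    by (rule span_minimal) (use img in auto, metis linear_subspace_image matrix_vector_mul_linear subspace_UNIV)
  then have "surj (\<lambda>x. (transpose V ** Sc) *v x)" using sp by auto
  then have "rank (transpose V ** Sc) = CARD('r)" by (simp add: full_rank_surjective)
  then show ?thesis using le1 le2 by linarith
qed

theorem lemma1:
  fixes M :: "real^'n::finite^'m::finite"
    and U :: "real^'r::finite^'m" and s :: "real^'r" and V :: "real^'r^'n"
    and p :: "'n pmf" and t :: real
  assumes rank: "rank M = CARD('r)"
    and svd: "is_thin_svd M U s V"
    and ppos: "\<forall>i. pmf p i > 0"
    and tpos: "t > 0"
    and dbound: "real CARD('d::finite) \<ge>
       7 * incoherence U V * real CARD('r) * (t + ln (real CARD('r)))
         / (real CARD('n) * Min (pmf p ` UNIV))"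
  shows "measure_pmf.prob (Pi_pmf (UNIV :: 'd set) undefined (\<lambda>_. p))
           {f. rank (sampled_matrix M p f :: real^'d^'m) = CARD('r)} \<ge> 1 - exp (- t)"
proof -
  have VV: "transpose V ** V = mat 1" using svd unfolding is_thin_svd_def by auto
  define r where "r = real CARD('r)"
  define n where "n = real CARD('n)"
  define d where "d = real CARD('d)"
  define mu where "mu = incoherence U V"
  define a where "a = Min (pmf p ` UNIV)"
  define Bd where "Bd = mu * r / n"
  have r1: "r \<ge> 1" and n0: "n > 0" unfolding r_def n_def by auto
  have a0: "a > 0" unfolding a_def using ppos by (subst Min_gr_iff) auto
  have pa: "pmf p i \<ge> a" for i unfolding a_def by (rule Min_le) auto
  have rowb: "(norm (V$i))^2 \<le> Bd" for i
  proof -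
    have "n / r * (norm (V$i))^2 \<le> Max ((\<lambda>i. real CARD('n) / real CARD('r) * (norm (V $ i))\<^sup>2) ` UNIV)"
      unfolding n_def r_def by (rule Max_ge) auto
    also have "\<dots> \<le> mu" unfolding mu_def incoherence_def by simp
    finally have "n / r * (norm (V$i))^2 \<le> mu" .
    then show ?thesis unfolding Bd_def using n0 r1 by (simp add: field_simps)
  qed
  have Bpos: "Bd > 0"
  proof (rule ccontr)
    assume "\<not> Bd > 0"
    then have "\<And>i. (norm (V$i))^2 \<le> 0" using rowb by (meson not_le order_trans)
    then have "(\<Sum>i\<in>UNIV. (norm (V$i))^2) \<le> 0" by (simp add: sum_nonpos)
    then show False using orth_rows_total[OF VV] by simp
  qed
  have mu0: "mu > 0" using Bpos n0 r1 unfolding Bd_def by (simp add: zero_less_mult_iff zero_less_divide_iff)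
  define q where "q = a / Bd"
  have q0: "q > 0" unfolding q_def using a0 Bpos by simp
  have esc: "measure_pmf.prob p {y. V$y \<notin> span W} \<ge> q * (real DIM(real^'r) - real (dim W))" for W
    using escape[OF VV rowb pa Bpos less_imp_le[OF a0], of W] unfolding q_def by simp
  have q1: "q \<le> 1"
  proof -
    have "q * r \<le> 1" using esc[of "{}"] unfolding r_def by simp (metis measure_pmf.prob_le_1 order_trans)
    moreover have "q \<le> q * r" using q0 r1 by simp
    ultimately show ?thesis by linarith
  qed
  define G where "G = {f::'d\<Rightarrow>'n. span ({} \<union> (\<lambda>j. V $ f j) ` UNIV) = UNIV}"
  have fb: "measure_pmf.prob (Pi_pmf (UNIV :: 'd set) undefined (\<lambda>_. p)) (- G) \<le> r * (1-q)^CARD('d)"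
    using fail_bound[where v="\<lambda>y. V$y" and p=p and q=q and D="UNIV::'d set" and W="{}" and dflt=undefined, OF esc q1] unfolding G_def r_def
    by (simp add: Compl_eq)
  have "(1-q)^CARD('d) \<le> exp (-q) ^ CARD('d)"
    using q1 by (intro power_mono) (use exp_ge_add_one_self[of "-q"] in auto)
  also have "\<dots> = exp (- (q * d))" unfolding d_def by (simp add: exp_of_nat_mult[symmetric])
  also have "\<dots> \<le> exp (- (t + ln r))"
  proof -
    have lr: "ln r \<ge> 0" using r1 by simp
    have "d \<ge> 7 * mu * r * (t + ln r) / (n * a)" using dbound unfolding d_def mu_def r_def n_def a_def by simp
    then have "q * d \<ge> q * (7 * mu * r * (t + ln r) / (n * a))" by (rule mult_left_mono) (use q0 in simp)
    also have "q * (7 * mu * r * (t + ln r) / (n * a)) = 7 * (t + ln r)"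
      unfolding q_def Bd_def using a0 n0 mu0 r1 by (simp add: field_simps)
    finally have h7: "7 * (t + ln r) \<le> q * d" .
    have "0 \<le> t + ln r" using tpos lr by simp
    then have "t + ln r \<le> 7 * (t + ln r)" by simp
    then have "q * d \<ge> t + ln r" using h7 by (rule order_trans)
    then show ?thesis by simp
  qed
  finally have "r * (1-q)^CARD('d) \<le> r * exp (- (t + ln r))" using r1 by (simp add: mult_left_mono)
  also have "\<dots> = exp (- t)" using r1 by (simp add: exp_diff exp_minus field_simps)
  finally have fail: "measure_pmf.prob (Pi_pmf (UNIV :: 'd set) undefined (\<lambda>_. p)) (- G) \<le> exp (-t)"
    using fb by linarith
  have "measure_pmf.prob (Pi_pmf (UNIV :: 'd set) undefined (\<lambda>_. p)) G = 1 - measure_pmf.prob (Pi_pmf (UNIV :: 'd set) undefined (\<lambda>_. p)) (- G)"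
    using measure_pmf.prob_compl[of G "Pi_pmf (UNIV :: 'd set) undefined (\<lambda>_. p)"] by (simp add: Compl_eq_Diff_UNIV)
  also have "G \<subseteq> {f. rank (sampled_matrix M p f :: real^'d^'m) = CARD('r)}"
    unfolding G_def using rank_sampled[OF rank svd ppos] by (auto simp: image_def)
  then have "measure_pmf.prob (Pi_pmf (UNIV :: 'd set) undefined (\<lambda>_. p)) G \<le> measure_pmf.prob (Pi_pmf (UNIV :: 'd set) undefined (\<lambda>_. p)) {f. rank (sampled_matrix M p f :: real^'d^'m) = CARD('r)}"
    by (intro measure_pmf.finite_measure_mono) auto
  ultimately show ?thesis using fail by linarith
qed

end
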